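(* Let $V$ be a finite ground set, $Y$ a finite state set, $p$ a prior over $\Phi_V$, and $f_p$ the coverage utility function. Let $\pi^*$ be a policy such that $f_p(E(\pi^*,\phi),\phi)=1$ for all $\phi\in\Phi_V$ and such that $c_{\mathrm{avg}}(\pi^*,p)$ is minimal (among all policies with this property). Then the height of $\pi^*$ is at most $|\Phi_V|$.
   Context: A realization is a map $\phi:V\to Y$; $\Phi_V$ is the set of realizations. A partial realization $\psi$ maps $\mathrm{dom}(\psi)\subseteq V$ to $Y$; $\phi\sim\psi$ means agreement on $\mathrm{dom}(\psi)$. The version space of $\psi$ is $\mathrm{VS}(\psi)=\{\phi\in\Phi_V:\phi\sim\psi\}$; for $A\subseteq V$, $\mathrm{VS}_{A,\phi}=\mathrm{VS}(\{(x,\phi(x)):x\in A\})$; $p(\mathcal{H})=\sum_{\phi\in\mathcal{H}}p(\phi)$. The coverage utility function is $f_p(A,\phi)=1-p(\mathrm{VS}_{A,\phi})+p(\phi)$. A (possibly randomized) policy maps the observed partial realization to the next element to select (observing its state) or $\bot$ (terminate); $E(\pi,\phi)$ is the set of elements selected under $\phi$; the height of $\pi$ is the maximum number of elements it may select over all realizations and random bits; $c_{\mathrm{avg}}(\pi,p)=\mathbb{E}_{\phi\sim p}[|E(\pi,\phi)|]$ (also over the policy's randomness). *)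

theory Defs
  imports "HOL-Probability.Probability_Mass_Function"
begin

text \<open>Realizations are maps 'v \<Rightarrow> 'y; the set of realizations Phi_V is a finite set H.
  Partial realizations are partial maps 'v \<rightharpoonup> 'y (domain = observed elements).\<close>

type_synonym ('v, 'y) det_policy = "('v \<rightharpoonup> 'y) \<Rightarrow> 'v option"
  \<comment> \<open>None = terminate (bottom), Some x = select x\<close>

definition consistent :: "('v \<Rightarrow> 'y) \<Rightarrow> ('v \<rightharpoonup> 'y) \<Rightarrow> bool" where
  "consistent \<phi> \<psi> \<longleftrightarrow> (\<forall>x\<in>dom \<psi>. \<psi> x = Some (\<phi> x))"

definition VS :: "('v \<Rightarrow> 'y) set \<Rightarrow> ('v \<rightharpoonup> 'y) \<Rightarrow> ('v \<Rightarrow> 'y) set" where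
  "VS H \<psi> = {\<phi> \<in> H. consistent \<phi> \<psi>}"

definition partial_of :: "'v set \<Rightarrow> ('v \<Rightarrow> 'y) \<Rightarrow> ('v \<rightharpoonup> 'y)" where
  "partial_of A \<phi> = (\<lambda>x. if x \<in> A then Some (\<phi> x) else None)"

definition VS_A :: "('v \<Rightarrow> 'y) set \<Rightarrow> 'v set \<Rightarrow> ('v \<Rightarrow> 'y) \<Rightarrow> ('v \<Rightarrow> 'y) set" where
  "VS_A H A \<phi> = VS H (partial_of A \<phi>)"

definition coverage :: "('v \<Rightarrow> 'y) set \<Rightarrow> (('v \<Rightarrow> 'y) \<Rightarrow> real) \<Rightarrow> 'v set \<Rightarrow> ('v \<Rightarrow> 'y) \<Rightarrow> real" where
  "coverage H p A \<phi> = 1 - (\<Sum>\<phi>'\<in>VS_A H A \<phi>. p \<phi>') + p \<phi>"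

definition step :: "('v, 'y) det_policy \<Rightarrow> ('v \<Rightarrow> 'y) \<Rightarrow> ('v \<rightharpoonup> 'y) \<Rightarrow> ('v \<rightharpoonup> 'y)" where
  "step d \<phi> \<psi> = (case d \<psi> of None \<Rightarrow> \<psi> | Some x \<Rightarrow> \<psi>(x \<mapsto> \<phi> x))"

definition run_state :: "('v, 'y) det_policy \<Rightarrow> ('v \<Rightarrow> 'y) \<Rightarrow> nat \<Rightarrow> ('v \<rightharpoonup> 'y)" where
  "run_state d \<phi> n = (step d \<phi> ^^ n) Map.empty"

definition terminates :: "('v, 'y) det_policy \<Rightarrow> ('v \<Rightarrow> 'y) \<Rightarrow> bool" where
  "terminates d \<phi> \<longleftrightarrow> (\<exists>n. d (run_state d \<phi> n) = None)"

text \<open>E(d, phi): the set of elements selected when running d under phi (until termination).\<close>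
definition sel :: "('v, 'y) det_policy \<Rightarrow> ('v \<Rightarrow> 'y) \<Rightarrow> 'v set" where
  "sel d \<phi> = dom (run_state d \<phi> (LEAST n. d (run_state d \<phi> n) = None))"

text \<open>A randomized policy is a distribution over deterministic policies (the random bits).\<close>
type_synonym ('v, 'y) rpolicy = "('v, 'y) det_policy pmf"

definition covers :: "('v \<Rightarrow> 'y) set \<Rightarrow> (('v \<Rightarrow> 'y) \<Rightarrow> real) \<Rightarrow> ('v, 'y) rpolicy \<Rightarrow> bool" where
  "covers H p \<pi> \<longleftrightarrow> (\<forall>d\<in>set_pmf \<pi>. \<forall>\<phi>\<in>H. terminates d \<phi> \<and> coverage H p (sel d \<phi>) \<phi> = 1)"

definition c_avg :: "('v \<Rightarrow> 'y) set \<Rightarrow> (('v \<Rightarrow> 'y) \<Rightarrow> real) \<Rightarrow> ('v, 'y) rpolicy \<Rightarrow> real" where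
  "c_avg H p \<pi> = (\<Sum>\<phi>\<in>H. p \<phi> * measure_pmf.expectation \<pi> (\<lambda>d. real (card (sel d \<phi>))))"

definition height :: "('v \<Rightarrow> 'y) set \<Rightarrow> ('v, 'y) rpolicy \<Rightarrow> nat" where
  "height H \<pi> = Sup {card (sel d \<phi>) | d \<phi>. d \<in> set_pmf \<pi> \<and> \<phi> \<in> H}"

end

theory Submission
  imports Defs
begin

lemma run_state_0: "run_state d \<phi> 0 = Map.empty"
  by (simp add: run_state_def)

lemma run_state_Suc: "run_state d \<phi> (Suc n) = step d \<phi> (run_state d \<phi> n)"
  by (simp add: run_state_def)

lemma run_consistent: "x \<in> dom (run_state d \<phi> n) \<Longrightarrow> run_state d \<phi> n x = Some (\<phi> x)"
proof (induction n arbitrary: x)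
  case 0 then show ?case by (simp add: run_state_0)
next
  case (Suc n) then show ?case
    by (auto simp: run_state_Suc step_def split: option.splits if_splits)
qed

lemma dom_Suc: "dom (run_state d \<phi> (Suc n)) =
   dom (run_state d \<phi> n) \<union> (case d (run_state d \<phi> n) of None \<Rightarrow> {} | Some x \<Rightarrow> {x})"
  by (auto simp: run_state_Suc step_def split: option.splits)

lemma dom_mono: "m \<le> n \<Longrightarrow> dom (run_state d \<phi> m) \<subseteq> dom (run_state d \<phi> n)"
proof (induction n)
  case 0 then show ?case by simp
next
  case (Suc n) then show ?case
    by (cases "m = Suc n") (auto simp: dom_Suc)
qed

lemma dom_queried: "x \<in> dom (run_state d \<phi> n) \<Longrightarrow> \<exists>j<n. d (run_state d \<phi> j) = Some x"
proof (induction n)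
  case 0 then show ?case by (simp add: run_state_0)
next
  case (Suc n)
  then have "x \<in> dom (run_state d \<phi> n) \<or> d (run_state d \<phi> n) = Some x"
    by (auto simp: dom_Suc split: option.splits)
  then show ?case
  proof
    assume "x \<in> dom (run_state d \<phi> n)"
    then show ?case using Suc.IH less_Suc_eq by blast
  qed auto
qed

lemma card_dom: "card (dom (run_state d (\<phi>::'v::finite \<Rightarrow> 'y) n)) \<le> n"
proof (induction n)
  case 0 then show ?case by (simp add: run_state_0)
next
  case (Suc n) then show ?case
    by (auto simp: dom_Suc card_insert_if split: option.splits)
qed

lemma stable: "d (run_state d \<phi> m) = None \<Longrightarrow> m \<le> n \<Longrightarrow> run_state d \<phi> n = run_state d \<phi> m"
proof (induction n)
  case 0 then show ?case by simp
next
  case (Suc n) then show ?case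
    by (cases "m = Suc n") (auto simp: run_state_Suc step_def)
qed

lemma agree:
  "(\<forall>j<n. \<forall>x. d (run_state d a j) = Some x \<longrightarrow> a x = b x) \<Longrightarrow> run_state d a n = run_state d b n"
proof (induction n)
  case 0 then show ?case by (simp add: run_state_0)
next
  case (Suc n)
  have "\<forall>j<n. \<forall>x. d (run_state d a j) = Some x \<longrightarrow> a x = b x" using Suc.prems less_SucI by blast
  then have IH: "run_state d a n = run_state d b n" by (rule Suc.IH)
  have q: "\<And>x. d (run_state d a n) = Some x \<Longrightarrow> a x = b x" using Suc.prems lessI by blast
  show ?case
  proof (cases "d (run_state d a n)")
    case None then show ?thesis using IH by (simp add: run_state_Suc step_def)
  next
    case (Some x) then show ?thesis using IH q[OF Some] by (simp add: run_state_Suc step_def)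
  qed
qed

lemma partial_of_run: "partial_of (dom (run_state d \<phi> n)) \<phi> = run_state d \<phi> n"
proof
  fix x show "partial_of (dom (run_state d \<phi> n)) \<phi> x = run_state d \<phi> n x"
    using run_consistent[of x d \<phi> n] by (cases "run_state d \<phi> n x") (auto simp: partial_of_def)
qed

lemma VS_A_run: "VS_A H (dom (run_state d \<phi> n)) \<phi> = VS H (run_state d \<phi> n)"
  by (simp add: VS_A_def partial_of_run)

lemma self_in_VS: "\<phi> \<in> H \<Longrightarrow> \<phi> \<in> VS H (run_state d \<phi> n)"
  using run_consistent[of _ d \<phi> n] by (auto simp: VS_def consistent_def)

lemma self_in_VS_A: "\<phi> \<in> H \<Longrightarrow> \<phi> \<in> VS_A H A \<phi>"
  by (auto simp: VS_A_def VS_def consistent_def partial_of_def split: if_splits)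

lemma coverage_iff:
  assumes fin: "finite H" and pos: "\<forall>\<phi>\<in>H. p \<phi> > 0" and h: "\<phi> \<in> H"
  shows "coverage H p A \<phi> = 1 \<longleftrightarrow> VS_A H A \<phi> = {\<phi>}"
proof -
  have sub: "VS_A H A \<phi> \<subseteq> H" by (auto simp: VS_A_def VS_def)
  have fin2: "finite (VS_A H A \<phi>)" using sub fin finite_subset by blast
  have mem: "\<phi> \<in> VS_A H A \<phi>" using self_in_VS_A[OF h] .
  have eq: "(\<Sum>\<phi>'\<in>VS_A H A \<phi>. p \<phi>') = p \<phi> + (\<Sum>\<phi>'\<in>VS_A H A \<phi> - {\<phi>}. p \<phi>')"
    using fin2 mem by (simp add: sum.remove)
  have "coverage H p A \<phi> = 1 \<longleftrightarrow> (\<Sum>\<phi>'\<in>VS_A H A \<phi> - {\<phi>}. p \<phi>') = 0"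
    unfolding coverage_def eq by linarith
  also have "\<dots> \<longleftrightarrow> VS_A H A \<phi> - {\<phi>} = {}"
  proof -
    have P: "\<And>x. x \<in> VS_A H A \<phi> - {\<phi>} \<Longrightarrow> p x > 0" using sub pos by auto
    have F: "finite (VS_A H A \<phi> - {\<phi>})" using fin2 by simp
    show ?thesis
    proof
      assume s0: "(\<Sum>\<phi>'\<in>VS_A H A \<phi> - {\<phi>}. p \<phi>') = 0"
      show "VS_A H A \<phi> - {\<phi>} = {}"
      proof (rule ccontr)
        assume ne: "VS_A H A \<phi> - {\<phi>} \<noteq> {}"
        have "0 < (\<Sum>\<phi>'\<in>VS_A H A \<phi> - {\<phi>}. p \<phi>')"
          by (rule sum_pos[OF F ne P])
        then show False using s0 by simp
      qed
    next
      assume e: "VS_A H A \<phi> - {\<phi>} = {}"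
      show "(\<Sum>\<phi>'\<in>VS_A H A \<phi> - {\<phi>}. p \<phi>') = 0" by (simp only: e sum.empty)
    qed
  qed
  also have "\<dots> \<longleftrightarrow> VS_A H A \<phi> = {\<phi>}" using mem by auto
  finally show ?thesis .
qed

definition sepK :: "('v \<Rightarrow> 'y) set \<Rightarrow> 'v option \<Rightarrow> bool" where
  "sepK K vo = (case vo of None \<Rightarrow> False | Some x \<Rightarrow> (\<exists>a\<in>K. \<exists>b\<in>K. a x \<noteq> b x))"

definition skip :: "('v \<Rightarrow> 'y) set \<Rightarrow> ('v, 'y) det_policy \<Rightarrow> ('v, 'y) det_policy" where
  "skip H d \<psi> = (let K = VS H \<psi>; \<phi>0 = (SOME \<phi>0. \<phi>0 \<in> K) in
     if K \<noteq> {} \<and> (\<exists>n. sepK K (d (run_state d \<phi>0 n)))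
     then d (run_state d \<phi>0 (LEAST n. sepK K (d (run_state d \<phi>0 n)))) else None)"

lemma nonsep_agree:
  assumes "\<forall>j<m. \<not> sepK K (d (run_state d a j))" "a \<in> K" "b \<in> K"
  shows "run_state d a m = run_state d b m"
proof (rule agree, intro allI impI)
  fix j x assume "j < m" "d (run_state d a j) = Some x"
  then show "a x = b x" using assms by (auto simp: sepK_def)
qed

lemma skip_Some:
  assumes "skip H d \<psi> = Some x" "\<phi> \<in> VS H \<psi>"
  shows "\<exists>m. d (run_state d \<phi> m) = Some x \<and> (\<exists>a\<in>VS H \<psi>. \<exists>b\<in>VS H \<psi>. a x \<noteq> b x)"
proof -
  define K where "K = VS H \<psi>"
  define \<phi>0 where "\<phi>0 = (SOME \<phi>0. \<phi>0 \<in> K)"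
  have ne: "K \<noteq> {}" using assms(2) K_def by auto
  then have in0: "\<phi>0 \<in> K" unfolding \<phi>0_def by (simp add: some_in_eq)
  have ex: "\<exists>n. sepK K (d (run_state d \<phi>0 n))"
    using assms(1) unfolding skip_def Let_def K_def[symmetric] \<phi>0_def[symmetric]
    by (auto split: if_splits)
  define m where "m = (LEAST n. sepK K (d (run_state d \<phi>0 n)))"
  have sm: "sepK K (d (run_state d \<phi>0 m))" unfolding m_def using ex by (rule LeastI_ex)
  have before: "\<forall>j<m. \<not> sepK K (d (run_state d \<phi>0 j))"
    unfolding m_def using not_less_Least by blast
  have dx: "d (run_state d \<phi>0 m) = Some x"
    using assms(1) ex ne unfolding skip_def Let_def K_def[symmetric] \<phi>0_def[symmetric] m_def
    by auto
  have "run_state d \<phi>0 m = run_state d \<phi> m"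
    using nonsep_agree[OF before in0] assms(2) K_def by auto
  then show ?thesis using dx sm K_def by (auto simp: sepK_def)
qed

lemma skip_None:
  assumes "skip H d \<psi> = None" "\<phi> \<in> VS H \<psi>"
  shows "\<forall>n. \<not> sepK (VS H \<psi>) (d (run_state d (SOME \<phi>0. \<phi>0 \<in> VS H \<psi>) n))"
proof -
  have ne: "VS H \<psi> \<noteq> {}" using assms(2) by auto
  have "\<not> (\<exists>n. sepK (VS H \<psi>) (d (run_state d (SOME \<phi>0. \<phi>0 \<in> VS H \<psi>) n)))"
  proof
    assume ex: "\<exists>n. sepK (VS H \<psi>) (d (run_state d (SOME \<phi>0. \<phi>0 \<in> VS H \<psi>) n))"
    let ?m = "LEAST n. sepK (VS H \<psi>) (d (run_state d (SOME \<phi>0. \<phi>0 \<in> VS H \<psi>) n))"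
    have "sepK (VS H \<psi>) (d (run_state d (SOME \<phi>0. \<phi>0 \<in> VS H \<psi>) ?m))"
      using ex by (rule LeastI_ex)
    moreover have "d (run_state d (SOME \<phi>0. \<phi>0 \<in> VS H \<psi>) ?m) = None"
      using assms(1) ex ne unfolding skip_def Let_def by simp
    ultimately show False by (simp add: sepK_def)
  qed
  then show ?thesis by blast
qed

context
  fixes H :: "('v::finite \<Rightarrow> 'y::finite) set" and d :: "('v, 'y) det_policy" and \<phi>
  assumes h: "\<phi> \<in> H"
begin

lemma finH: "finite H" by simp

lemma decrease:
  assumes "skip H d (run_state (skip H d) \<phi> k) = Some x"
  shows "card (VS H (run_state (skip H d) \<phi> (Suc k))) < card (VS H (run_state (skip H d) \<phi> k))"
proof -
  let ?\<psi> = "run_state (skip H d) \<phi> k"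
  obtain a b where ab: "a \<in> VS H ?\<psi>" "b \<in> VS H ?\<psi>" "a x \<noteq> b x"
    using skip_Some[OF assms self_in_VS[OF h]] by blast
  obtain c where c: "c \<in> VS H ?\<psi>" "c x \<noteq> \<phi> x"
  proof (cases "a x = \<phi> x")
    case True then show ?thesis using that[of b] ab by simp
  next
    case False then show ?thesis using that[of a] ab by simp
  qed
  have nxt: "run_state (skip H d) \<phi> (Suc k) = ?\<psi>(x \<mapsto> \<phi> x)"
    using assms by (simp add: run_state_Suc step_def)
  have "VS H (run_state (skip H d) \<phi> (Suc k)) \<subseteq> VS H ?\<psi> - {c}"
  proof
    fix e assume e: "e \<in> VS H (run_state (skip H d) \<phi> (Suc k))"
    have ce: "consistent e (?\<psi>(x \<mapsto> \<phi> x))" using e unfolding nxt VS_def by simp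
    have "(?\<psi>(x \<mapsto> \<phi> x)) x = Some (e x)" using ce unfolding consistent_def by simp
    then have ex: "e x = \<phi> x" by simp
    have "consistent e ?\<psi>"
      unfolding consistent_def
    proof
      fix y assume y: "y \<in> dom ?\<psi>"
      show "?\<psi> y = Some (e y)"
      proof (cases "y = x")
        case True then show ?thesis using run_consistent[OF y] ex by simp
      next
        case False
        have "y \<in> dom (?\<psi>(x \<mapsto> \<phi> x))" using y by simp
        then have "(?\<psi>(x \<mapsto> \<phi> x)) y = Some (e y)" using ce unfolding consistent_def by blast
        then show ?thesis using False by simp
      qed
    qed
    moreover have "e \<in> H" using e unfolding VS_def by blast
    moreover have "e \<noteq> c" using ex c(2) by metis
    ultimately show "e \<in> VS H ?\<psi> - {c}" unfolding VS_def by blast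
  qed
  then have "card (VS H (run_state (skip H d) \<phi> (Suc k))) \<le> card (VS H ?\<psi> - {c})"
    by (intro card_mono) simp_all
  also have "\<dots> < card (VS H ?\<psi>)"
    by (rule card_Diff1_less) (simp_all add: c(1))
  finally show ?thesis .
qed

lemma decrease_total:
  "(\<forall>j<k. skip H d (run_state (skip H d) \<phi> j) \<noteq> None) \<Longrightarrow>
   card (VS H (run_state (skip H d) \<phi> k)) + k \<le> card H"
proof (induction k)
  case 0
  have "VS H (run_state (skip H d) \<phi> 0) \<subseteq> H" by (auto simp: VS_def)
  then show ?case by (simp add: card_mono)
next
  case (Suc k)
  then obtain x where "skip H d (run_state (skip H d) \<phi> k) = Some x" by auto
  then have lt: "card (VS H (run_state (skip H d) \<phi> (Suc k))) < card (VS H (run_state (skip H d) \<phi> k))"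
    by (rule decrease)
  have "\<forall>j<k. skip H d (run_state (skip H d) \<phi> j) \<noteq> None" using Suc.prems by simp
  then have "card (VS H (run_state (skip H d) \<phi> k)) + k \<le> card H" by (rule Suc.IH)
  then show ?case using lt by linarith
qed

lemma skip_term: "\<exists>j<card H. skip H d (run_state (skip H d) \<phi> j) = None"
proof (rule ccontr)
  assume "\<not> ?thesis"
  then have "\<forall>j<card H. skip H d (run_state (skip H d) \<phi> j) \<noteq> None" by auto
  then have "card (VS H (run_state (skip H d) \<phi> (card H))) + card H \<le> card H"
    by (rule decrease_total)
  then have c0: "card (VS H (run_state (skip H d) \<phi> (card H))) = 0" by simp
  have fin: "finite (VS H (run_state (skip H d) \<phi> (card H)))" by simp
  have "VS H (run_state (skip H d) \<phi> (card H)) = {}" using c0 fin by simp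
  then show False using self_in_VS[OF h, of "skip H d" "card H"] by simp
qed

lemma skip_terminates: "terminates (skip H d) \<phi>"
proof -
  obtain j where "j < card H" "skip H d (run_state (skip H d) \<phi> j) = None"
    using skip_term by (elim exE conjE)
  then show ?thesis unfolding terminates_def by (intro exI)
qed

lemma skip_card: "card (sel (skip H d) \<phi>) < card H"
proof -
  obtain j where j: "j < card H" "skip H d (run_state (skip H d) \<phi> j) = None"
    using skip_term by (elim exE conjE)
  have le: "(LEAST n. skip H d (run_state (skip H d) \<phi> n) = None) \<le> j"
    using j(2) by (rule Least_le)
  have "card (sel (skip H d) \<phi>) \<le> (LEAST n. skip H d (run_state (skip H d) \<phi> n) = None)"
    unfolding sel_def by (rule card_dom)
  then show ?thesis using le j(1) by linarith
qed

lemma skip_sub: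
  assumes "terminates d \<phi>"
  shows "sel (skip H d) \<phi> \<subseteq> sel d \<phi>"
proof
  fix x assume "x \<in> sel (skip H d) \<phi>"
  then have "\<exists>j<(LEAST n. skip H d (run_state (skip H d) \<phi> n) = None).
      skip H d (run_state (skip H d) \<phi> j) = Some x"
    unfolding sel_def by (rule dom_queried)
  then obtain j where "skip H d (run_state (skip H d) \<phi> j) = Some x" by blast
  then have "\<exists>m. d (run_state d \<phi> m) = Some x \<and>
     (\<exists>a\<in>VS H (run_state (skip H d) \<phi> j). \<exists>b\<in>VS H (run_state (skip H d) \<phi> j). a x \<noteq> b x)"
    by (rule skip_Some[OF _ self_in_VS[OF h]])
  then obtain m where m: "d (run_state d \<phi> m) = Some x" by blast
  define M where "M = (LEAST n. d (run_state d \<phi> n) = None)"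
  have M: "d (run_state d \<phi> M) = None"
    using assms unfolding terminates_def M_def by (rule LeastI_ex)
  have "m < M"
  proof (rule ccontr)
    assume "\<not> m < M"
    then have "run_state d \<phi> m = run_state d \<phi> M" using stable[of d \<phi> M m] M by simp
    then show False using m M by simp
  qed
  then have "dom (run_state d \<phi> (Suc m)) \<subseteq> sel d \<phi>"
    unfolding sel_def M_def[symmetric] by (intro dom_mono) simp
  moreover have "x \<in> dom (run_state d \<phi> (Suc m))" using m by (simp add: dom_Suc)
  ultimately show "x \<in> sel d \<phi>" by blast
qed

lemma skip_cover:
  assumes pos: "\<forall>\<phi>\<in>H. p \<phi> > 0"
    and dcov: "\<forall>\<phi>\<in>H. terminates d \<phi> \<and> coverage H p (sel d \<phi>) \<phi> = 1"
  shows "coverage H p (sel (skip H d) \<phi>) \<phi> = 1"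
proof -
  define N where "N = (LEAST n. skip H d (run_state (skip H d) \<phi> n) = None)"
  have N: "skip H d (run_state (skip H d) \<phi> N) = None"
    using skip_terminates unfolding terminates_def N_def by (rule LeastI_ex)
  let ?K = "VS H (run_state (skip H d) \<phi> N)"
  have phiK: "\<phi> \<in> ?K" by (rule self_in_VS[OF h])
  define \<phi>0 where "\<phi>0 = (SOME \<phi>0. \<phi>0 \<in> ?K)"
  have in0: "\<phi>0 \<in> ?K" unfolding \<phi>0_def using phiK some_in_eq by blast
  have nosep: "\<forall>n. \<not> sepK ?K (d (run_state d \<phi>0 n))"
    using skip_None[OF N phiK] unfolding \<phi>0_def by blast
  have same: "run_state d \<phi>0 n = run_state d \<phi> n" for n
  proof -
    have "\<forall>j<n. \<not> sepK ?K (d (run_state d \<phi>0 j))" using nosep by simp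
    then show ?thesis by (rule nonsep_agree[OF _ in0 phiK])
  qed
  have Kone: "?K = {\<phi>}"
  proof
    show "{\<phi>} \<subseteq> ?K" using phiK by simp
    show "?K \<subseteq> {\<phi>}"
    proof
      fix b assume b: "b \<in> ?K"
      have "coverage H p (sel d \<phi>) \<phi> = 1" using dcov h by simp
      then have covd: "VS_A H (sel d \<phi>) \<phi> = {\<phi>}"
        unfolding coverage_iff[OF finH pos h] .
      have "b \<in> VS_A H (sel d \<phi>) \<phi>"
        unfolding VS_A_def VS_def consistent_def partial_of_def
      proof (auto)
        show "b \<in> H" using b by (auto simp: VS_def)
      next
        fix x assume "x \<in> sel d \<phi>"
        then have "\<exists>j<(LEAST n. d (run_state d \<phi> n) = None). d (run_state d \<phi> j) = Some x"
          unfolding sel_def by (rule dom_queried)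
        then obtain j where "d (run_state d \<phi> j) = Some x" by blast
        then have "d (run_state d \<phi>0 j) = Some x" using same by simp
        moreover have "\<not> sepK ?K (d (run_state d \<phi>0 j))" using nosep by simp
        ultimately have "\<not> (\<exists>a\<in>?K. \<exists>c\<in>?K. a x \<noteq> c x)"
          by (simp add: sepK_def)
        then have "\<forall>a\<in>?K. \<forall>c\<in>?K. a x = c x" by simp
        then show "\<phi> x = b x" using b phiK by simp
      next
        fix x y assume "(if x \<in> sel d \<phi> then Some (\<phi> x) else None) = Some y"
        then show "x \<in> sel d \<phi>" by (simp split: if_splits)
      qed
      then show "b \<in> {\<phi>}" using covd by simp
    qed
  qed
  show ?thesis
    unfolding coverage_iff[OF finH pos h] sel_def N_def[symmetric] VS_A_run using Kone .
qed

end

theorem lemma11: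
  fixes H :: "('v::finite \<Rightarrow> 'y::finite) set"
    and p :: "('v \<Rightarrow> 'y) \<Rightarrow> real"
    and \<pi>s :: "('v, 'y) rpolicy"
  assumes prior_pos: "\<forall>\<phi>\<in>H. p \<phi> > 0"
    and prior_sum: "(\<Sum>\<phi>\<in>H. p \<phi>) = 1"
    and cov: "covers H p \<pi>s"
    and opt: "\<forall>\<pi>. covers H p \<pi> \<longrightarrow> c_avg H p \<pi>s \<le> c_avg H p \<pi>"
  shows "height H \<pi>s \<le> card H"
proof (rule ccontr)
  assume nh: "\<not> height H \<pi>s \<le> card H"
  have "\<exists>d\<in>set_pmf \<pi>s. \<exists>\<phi>\<in>H. card (sel d \<phi>) > card H"
  proof (rule ccontr)
    assume "\<not> ?thesis"
    then have all: "\<forall>d\<in>set_pmf \<pi>s. \<forall>\<phi>\<in>H. card (sel d \<phi>) \<le> card H" by (auto simp: not_less)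
    let ?X = "{card (sel d \<phi>) | d \<phi>. d \<in> set_pmf \<pi>s \<and> \<phi> \<in> H}"
    have "Sup ?X \<le> card H"
    proof (cases "?X = {}")
      case True then show ?thesis by (simp only: True Sup_nat_empty)
    next
      case False
      show ?thesis
      proof (rule cSup_least)
        show "?X \<noteq> {}" using False .
        fix x assume "x \<in> ?X"
        then show "x \<le> card H" using all by auto
      qed
    qed
    then show False using nh unfolding height_def by simp
  qed
  then obtain d0 \<phi>0 where d0: "d0 \<in> set_pmf \<pi>s" and h0: "\<phi>0 \<in> H"
    and big: "card (sel d0 \<phi>0) > card H" by blast
  define \<pi>' where "\<pi>' = map_pmf (skip H) \<pi>s"
  have dcov: "\<And>d. d \<in> set_pmf \<pi>s \<Longrightarrow> \<forall>\<phi>\<in>H. terminates d \<phi> \<and> coverage H p (sel d \<phi>) \<phi> = 1"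
    using cov unfolding covers_def by blast
  have cov': "covers H p \<pi>'"
    unfolding covers_def \<pi>'_def
    using skip_terminates skip_cover[OF _ prior_pos dcov] by auto
  define g where "g = (\<lambda>\<phi> d. real (card (sel (skip H d) \<phi>)))"
  define hh where "hh = (\<lambda>\<phi> (d::('v, 'y) det_policy). real (card (sel d \<phi>)))"
  have intg: "\<And>\<phi>. integrable (measure_pmf \<pi>s) (g \<phi>)"
  proof -
    fix \<phi>
    show "integrable (measure_pmf \<pi>s) (g \<phi>)"
      by (rule measure_pmf.integrable_const_bound[where B="real (card (UNIV::'v set))"])
        (auto simp: g_def intro!: AE_pmfI card_mono)
  qed
  have inth: "\<And>\<phi>. integrable (measure_pmf \<pi>s) (hh \<phi>)"
  proof -
    fix \<phi>
    show "integrable (measure_pmf \<pi>s) (hh \<phi>)"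
      by (rule measure_pmf.integrable_const_bound[where B="real (card (UNIV::'v set))"])
        (auto simp: hh_def intro!: AE_pmfI card_mono)
  qed
  have le: "\<And>\<phi>. \<phi> \<in> H \<Longrightarrow> measure_pmf.expectation \<pi>s (g \<phi>) \<le> measure_pmf.expectation \<pi>s (hh \<phi>)"
  proof -
    fix \<phi> assume h: "\<phi> \<in> H"
    show "measure_pmf.expectation \<pi>s (g \<phi>) \<le> measure_pmf.expectation \<pi>s (hh \<phi>)"
    proof (rule integral_mono_AE[OF intg inth], rule AE_pmfI)
      fix d assume "d \<in> set_pmf \<pi>s"
      then have "sel (skip H d) \<phi> \<subseteq> sel d \<phi>" using skip_sub[OF h] dcov h by blast
      then show "g \<phi> d \<le> hh \<phi> d" unfolding g_def hh_def by (simp add: card_mono)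
    qed
  qed
  have lt: "measure_pmf.expectation \<pi>s (g \<phi>0) < measure_pmf.expectation \<pi>s (hh \<phi>0)"
  proof -
    have "pmf \<pi>s d0 > 0" using d0 by (simp add: pmf_positive)
    also have "pmf \<pi>s d0 = measure_pmf.expectation \<pi>s (indicator {d0})"
      by (simp add: measure_pmf_single)
    also have "\<dots> \<le> measure_pmf.expectation \<pi>s (\<lambda>d. hh \<phi>0 d - g \<phi>0 d)"
    proof (rule integral_mono_AE)
      show "integrable (measure_pmf \<pi>s) (indicator {d0} :: _ \<Rightarrow> real)"
        by (rule measure_pmf.integrable_const_bound[where B=1]) (auto intro!: AE_pmfI)
      show "integrable (measure_pmf \<pi>s) (\<lambda>d. hh \<phi>0 d - g \<phi>0 d)"
        using intg inth by auto
      show "AE d in measure_pmf \<pi>s. indicator {d0} d \<le> hh \<phi>0 d - g \<phi>0 d"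
      proof (rule AE_pmfI)
        fix d assume d: "d \<in> set_pmf \<pi>s"
        then have "sel (skip H d) \<phi>0 \<subseteq> sel d \<phi>0" using skip_sub[OF h0] dcov h0 by blast
        then have ge: "g \<phi>0 d \<le> hh \<phi>0 d" unfolding g_def hh_def by (simp add: card_mono)
        show "indicator {d0} d \<le> hh \<phi>0 d - g \<phi>0 d"
        proof (cases "d = d0")
          case True
          have "card (sel (skip H d0) \<phi>0) < card (sel d0 \<phi>0)"
            using skip_card[OF h0, of d0] big by simp
          then show ?thesis using True unfolding g_def hh_def by simp
        next
          case False then show ?thesis using ge by simp
        qed
      qed
    qed
    also have "\<dots> = measure_pmf.expectation \<pi>s (hh \<phi>0) - measure_pmf.expectation \<pi>s (g \<phi>0)"
      by (rule Bochner_Integration.integral_diff[OF inth intg])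
    finally show ?thesis by simp
  qed
  have finH: "finite H" by simp
  have "c_avg H p \<pi>' = (\<Sum>\<phi>\<in>H. p \<phi> * measure_pmf.expectation \<pi>s (g \<phi>))"
    unfolding c_avg_def \<pi>'_def g_def by simp
  also have "\<dots> < (\<Sum>\<phi>\<in>H. p \<phi> * measure_pmf.expectation \<pi>s (hh \<phi>))"
  proof (rule sum_strict_mono_ex1[OF finH])
    show "\<forall>x\<in>H. p x * measure_pmf.expectation \<pi>s (g x) \<le> p x * measure_pmf.expectation \<pi>s (hh x)"
      using le prior_pos by (auto intro!: mult_left_mono less_imp_le)
    show "\<exists>a\<in>H. p a * measure_pmf.expectation \<pi>s (g a) < p a * measure_pmf.expectation \<pi>s (hh a)"
      using lt prior_pos h0 by (auto intro!: bexI[of _ \<phi>0] mult_strict_left_mono)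
  qed
  also have "\<dots> = c_avg H p \<pi>s" unfolding c_avg_def hh_def by simp
  finally show False using opt cov' by force
qed

end
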